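(* Let $P,Q\in\mathbb R[X]$ be real polynomials such that all (complex) roots of $P$ are real (respectively, all roots of $P$ lie in $\mathbb R_{\ge0}$). If there exists $c>0$ such that $|Q(t)|\le c|P(t)|$ for all $t\in\mathbb R$ (respectively, for all $t\in\mathbb R_{\ge0}$), then $Q=\kappa P$ for some $\kappa\in\mathbb R$. Moreover, if $\deg Q<\deg P$, then $Q=0$. *)

theory Defs
  imports Complex_Main "HOL-Computational_Algebra.Polynomial"
begin

end

theory Submission
  imports Defs "HOL-Computational_Algebra.Fundamental_Theorem_Algebra"
begin

lemma mp_add: "map_poly (of_real :: real \<Rightarrow> complex) (p + q) = map_poly of_real p + map_poly of_real q"
  by (rule poly_eqI) (simp add: coeff_map_poly)
lemma mp_mult: "map_poly (of_real :: real \<Rightarrow> complex) (p * q) = map_poly of_real p * map_poly of_real q"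
  by (induction p) (auto simp: map_poly_pCons mp_add map_poly_smult)
lemma mp_poly: "poly (map_poly (of_real :: real \<Rightarrow> complex) p) (of_real x) = of_real (poly p x)"
  by (induction p) (auto simp: map_poly_pCons)
lemma mp_deg: "degree (map_poly (of_real :: real \<Rightarrow> complex) p) = degree p"
  by (rule degree_map_poly) simp

lemma main_aux:
  fixes P Q :: "real poly" and S :: "real set"
  assumes up: "\<And>a x. a \<in> S \<Longrightarrow> a \<le> x \<Longrightarrow> x \<in> S" and ne: "S \<noteq> {}"
  and P0: "P \<noteq> 0"
  and roots: "\<And>z. poly (map_poly complex_of_real P) z = 0 \<Longrightarrow> \<exists>x\<in>S. z = of_real x"
  and bd: "\<And>t. t \<in> S \<Longrightarrow> \<bar>poly Q t\<bar> \<le> c * \<bar>poly P t\<bar>"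
  shows "\<exists>k. Q = smult k P"
  using P0 roots bd
proof (induction "degree P" arbitrary: P Q rule: less_induct)
  case less
  show ?case
  proof (cases "degree P = 0")
    case True
    then obtain p where P: "P = [:p:]" using degree_eq_zeroE by blast
    with less have p: "p \<noteq> 0" by auto
    obtain a where a: "a \<in> S" using ne by auto
    have "degree Q = 0"
    proof (rule ccontr)
      assume "degree Q \<noteq> 0"
      hence "filterlim (poly Q) at_infinity at_infinity" by (intro filterlim_poly_at_infinity) simp
      hence "filterlim (poly Q) at_infinity at_top" using filterlim_mono at_top_le_at_infinity by blast
      hence "eventually (\<lambda>x. \<bar>c*\<bar>p\<bar>\<bar> + 1 \<le> norm (poly Q x)) at_top"
      proof -
        have "\<forall>r>0. \<forall>\<^sub>F x in at_top. r \<le> norm (poly Q x)"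
          using \<open>filterlim (poly Q) at_infinity at_top\<close> filterlim_at_infinity[of 0 "poly Q" at_top] by simp
        then show ?thesis by (metis add_pos_nonneg zero_less_one abs_ge_zero add.commute)
      qed
      then obtain N where N: "\<And>x. x \<ge> N \<Longrightarrow> \<bar>c*\<bar>p\<bar>\<bar> + 1 \<le> \<bar>poly Q x\<bar>"
        unfolding eventually_at_top_linorder by auto
      have "max N a \<in> S" using up a by simp
      from less.prems(3)[OF this] N[of "max N a"] P show False by simp
    qed
    then obtain q where "Q = [:q:]" using degree_eq_zeroE by blast
    then show ?thesis using P p by (intro exI[of _ "q/p"]) simp
  next
    case False
    then have "\<not> constant (poly (map_poly complex_of_real P))" using constant_degree mp_deg by metis
    then obtain z where "poly (map_poly complex_of_real P) z = 0" using fundamental_theorem_of_algebra by blast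
    then obtain a where a: "a \<in> S" "z = of_real a" using less.prems(2) by blast
    have "poly P a = 0" using mp_poly[of P a] a \<open>poly _ z = 0\<close> by simp
    then obtain P' where P': "P = [:-a,1:] * P'" using poly_eq_0_iff_dvd dvdE by blast
    have "\<bar>poly Q a\<bar> \<le> 0" using less.prems(3)[OF a(1)] \<open>poly P a = 0\<close> by simp
    then have "poly Q a = 0" by simp
    then obtain Q' where Q': "Q = [:-a,1:] * Q'" using poly_eq_0_iff_dvd dvdE by blast
    have P'0: "P' \<noteq> 0" using P' less.prems(1) by auto
    have dP: "degree P = 1 + degree P'" unfolding P' using P'0 by (subst degree_mult_eq) auto
    have roots': "\<exists>x\<in>S. z = of_real x" if "poly (map_poly complex_of_real P') z = 0" for z
    proof -
      have "poly (map_poly complex_of_real P) z = 0" unfolding P' mp_mult poly_mult using that by simp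
      then show ?thesis using less.prems(2) by blast
    qed
    have bd1: "\<bar>poly Q' t\<bar> \<le> c * \<bar>poly P' t\<bar>" if "t \<in> S" "t \<noteq> a" for t
    proof -
      have "\<bar>t - a\<bar> * \<bar>poly Q' t\<bar> \<le> \<bar>t - a\<bar> * (c * \<bar>poly P' t\<bar>)"
      proof -
        have "poly P t = (t - a) * poly P' t" "poly Q t = (t - a) * poly Q' t"
          unfolding P' Q' poly_mult by simp_all
        then show ?thesis using less.prems(3)[OF that(1)] by (simp add: abs_mult mult.assoc mult.left_commute)
      qed
      moreover have "\<bar>t - a\<bar> > 0" using that by simp
      ultimately show ?thesis by simp
    qed
    have bd': "\<bar>poly Q' t\<bar> \<le> c * \<bar>poly P' t\<bar>" if "t \<in> S" for t
    proof (cases "t = a")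
      case False then show ?thesis using bd1 that by blast
    next
      case True
      let ?f = "\<lambda>t. c * \<bar>poly P' t\<bar> - \<bar>poly Q' t\<bar>"
      have lim: "(?f \<longlongrightarrow> ?f a) (at_right a)"
        by (intro tendsto_intros)
      have ev: "eventually (\<lambda>y. 0 \<le> ?f y) (at_right a)"
      proof -
        have "eventually (\<lambda>y. a < y) (at_right a)" by (rule eventually_at_right_less)
        then show ?thesis
        proof (rule eventually_mono)
          fix y assume "a < y"
          then have "y \<in> S" "y \<noteq> a" using up[OF a(1), of y] by auto
          then show "0 \<le> ?f y" using bd1 by simp
        qed
      qed
      have "0 \<le> ?f a" by (rule tendsto_lowerbound[OF lim ev]) simp
      then show ?thesis using True by simp
    qed
    have "degree P' < degree P" using dP by simp
    from less.hyps[OF this P'0 roots' bd'] obtain k where "Q' = smult k P'" by blast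
    then show ?thesis using P' Q' by (intro exI[of _ k]) simp
  qed
qed

theorem lemma8:
  fixes P Q :: "real poly"
  shows
   "((\<forall>z. poly (map_poly complex_of_real P) z = 0 \<longrightarrow> z \<in> \<real>) \<and>
     (\<exists>c>0. \<forall>t::real. \<bar>poly Q t\<bar> \<le> c * \<bar>poly P t\<bar>)
     \<longrightarrow> (\<exists>\<kappa>. Q = smult \<kappa> P) \<and> (degree Q < degree P \<longrightarrow> Q = 0))
    \<and>
    ((\<forall>z. poly (map_poly complex_of_real P) z = 0 \<longrightarrow> z \<in> complex_of_real ` {0..}) \<and>
     (\<exists>c>0. \<forall>t::real. t \<ge> 0 \<longrightarrow> \<bar>poly Q t\<bar> \<le> c * \<bar>poly P t\<bar>)
     \<longrightarrow> (\<exists>\<kappa>. Q = smult \<kappa> P) \<and> (degree Q < degree P \<longrightarrow> Q = 0))"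
proof -
  have fin: "(\<exists>\<kappa>. Q = smult \<kappa> P) \<and> (degree Q < degree P \<longrightarrow> Q = 0)" if "\<exists>\<kappa>. Q = smult \<kappa> P"
  proof -
    from that obtain k where k: "Q = smult k P" by blast
    have "Q = 0" if "degree Q < degree P"
    proof (rule ccontr)
      assume "Q \<noteq> 0"
      then have "k \<noteq> 0" using k by auto
      then show False using that k by simp
    qed
    then show ?thesis using that by blast
  qed
  have P0: "P \<noteq> 0" if "\<forall>z. poly (map_poly complex_of_real P) z = 0 \<longrightarrow> z \<in> \<real>"
  proof
    assume "P = 0"
    then have "\<i> \<in> \<real>" using that by simp
    then show False by (simp add: complex_is_Real_iff)
  qed
  show ?thesis
  proof (intro conjI impI)
    assume h: "(\<forall>z. poly (map_poly complex_of_real P) z = 0 \<longrightarrow> z \<in> \<real>) \<and>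
     (\<exists>c>0. \<forall>t::real. \<bar>poly Q t\<bar> \<le> c * \<bar>poly P t\<bar>)"
    then obtain c where c: "\<forall>t::real. \<bar>poly Q t\<bar> \<le> c * \<bar>poly P t\<bar>" by blast
    have "\<exists>k. Q = smult k P"
    proof (rule main_aux[of UNIV])
      show "P \<noteq> 0" using P0 h by blast
      fix z assume "poly (map_poly complex_of_real P) z = 0"
      then have "z \<in> \<real>" using h by blast
      then show "\<exists>x\<in>UNIV. z = complex_of_real x" by (auto elim: Reals_cases)
    qed (use c in auto)
    then show "\<exists>\<kappa>. Q = smult \<kappa> P" by blast
    then show "degree Q < degree P \<Longrightarrow> Q = 0" using fin by blast
  next
    assume h: "(\<forall>z. poly (map_poly complex_of_real P) z = 0 \<longrightarrow> z \<in> complex_of_real ` {0..}) \<and>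
     (\<exists>c>0. \<forall>t::real. t \<ge> 0 \<longrightarrow> \<bar>poly Q t\<bar> \<le> c * \<bar>poly P t\<bar>)"
    then obtain c where c: "\<forall>t::real. t \<ge> 0 \<longrightarrow> \<bar>poly Q t\<bar> \<le> c * \<bar>poly P t\<bar>" by blast
    have "\<exists>k. Q = smult k P"
    proof (rule main_aux[of "{0..}"])
      show "P \<noteq> 0" using P0 h by fastforce
      fix z assume "poly (map_poly complex_of_real P) z = 0"
      then show "\<exists>x\<in>{0..}. z = complex_of_real x" using h by blast
    qed (use c in auto)
    then show "\<exists>\<kappa>. Q = smult \<kappa> P" by blast
    then show "degree Q < degree P \<Longrightarrow> Q = 0" using fin by blast
  qed
qed

end
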